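(* Let $\varphi(s,v)=\vec c(s)+v\vec q(s)$ be a developable timelike ruled surface of type $M^1_-$ in $\mathbb{R}^3_1$, and let $R$ be a nonzero constant. A developable timelike ruled surface $\varphi^*$ of type $M^1_+$ or $M^1_-$ with striction curve $\vec c^*=\vec c+R\vec a$ is a Mannheim offset of $\varphi$ if and only if $$\frac{d\kappa}{ds}=-\frac{1}{R}\left(R^2\kappa^2\left(\frac{ds_1}{ds}\right)^2-1\right)-\frac{1}{ds_1/ds}\frac{d^2s_1}{ds^2}\kappa .$$
   Context: Work in Minkowski 3-space $\mathbb{R}^3_1$, i.e. $\mathbb{R}^3$ with $\langle x,y\rangle=-x_1y_1+x_2y_2+x_3y_3$, norm $\|x\|=\sqrt{|\langle x,x\rangle|}$, and Lorentzian cross product $x\times y=(x_2y_3-x_3y_2,\,x_1y_3-x_3y_1,\,x_2y_1-x_1y_2)$. A ruled surface is $\varphi(s,v)=\vec c(s)+v\vec q(s)$, where $\vec q$ is a unit non-null vector field with $\langle\vec q,\vec q\rangle=\varepsilon_2\in\{\pm1\}$, $d\vec q/ds$ is non-null, and the base curve $\vec c$ is the striction curve, i.e. $\langle d\vec q/ds,d\vec c/ds\rangle=0$; $s$ is the arc-length parameter of $\vec c$. Its Frenet frame is $\{\vec q,\vec h,\vec a\}$ with central normal $\vec h=\frac{d\vec q/ds}{\|d\vec q/ds\|}$ and asymptotic normal $\vec a=\frac{(d\vec q/ds)\times\vec q}{\|d\vec q/ds\|}$. The surface is of type $M^1_-$ if $\vec q$ is timelike and $\vec h$ spacelike; of type $M^1_+$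 if $\vec q$ and $\vec h$ are both spacelike (both timelike surfaces). Let $s_1$ be the arc-length parameter of the spherical image curve traced by $\vec q$, and $\kappa$ the conical curvature of the directing cone; for types $M^1_\pm$: $d\vec q/ds_1=\vec h$, $d\vec h/ds_1=-\varepsilon_2\vec q+\kappa\vec a$, $d\vec a/ds_1=\varepsilon_2\kappa\vec h$. A ruled surface is developable iff its distribution parameter $\det(d\vec c/ds,\vec q,d\vec q/ds)/\langle d\vec q/ds,d\vec q/ds\rangle$ vanishes identically. A ruled surface $\varphi^*(s,v)=\vec c^*(s)+v\vec q^*(s)$ with striction curve $\vec c^*$ and Frenet frame $\{\vec q^*,\vec h^*,\vec a^*\}$ is a Mannheim offset of the timelike ruled surface $\varphi$ if there is a one-to-one correspondence between their rulings such that $\vec h^*=\vec a$. *)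

theory Defs
  imports "HOL-Analysis.Analysis"
begin

definition mink :: "real^3 \<Rightarrow> real^3 \<Rightarrow> real" where
  "mink x y = - x$1 * y$1 + x$2 * y$2 + x$3 * y$3"

definition mnorm :: "real^3 \<Rightarrow> real" where
  "mnorm x = sqrt \<bar>mink x x\<bar>"

definition lcross :: "real^3 \<Rightarrow> real^3 \<Rightarrow> real^3" where
  "lcross x y = vector [x$2 * y$3 - x$3 * y$2, x$1 * y$3 - x$3 * y$1, x$2 * y$1 - x$1 * y$2]"

definition det3 :: "real^3 \<Rightarrow> real^3 \<Rightarrow> real^3 \<Rightarrow> real" where
  "det3 x y z = x$1 * (y$2 * z$3 - y$3 * z$2) - x$2 * (y$1 * z$3 - y$3 * z$1)
              + x$3 * (y$1 * z$2 - y$2 * z$1)"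

definition timelike :: "real^3 \<Rightarrow> bool" where
  "timelike x \<longleftrightarrow> mink x x < 0"

definition spacelike :: "real^3 \<Rightarrow> bool" where
  "spacelike x \<longleftrightarrow> mink x x > 0"

definition vd :: "(real \<Rightarrow> real^3) \<Rightarrow> real \<Rightarrow> real^3" where
  "vd f t = vector_derivative f (at t)"

definition central_normal :: "(real \<Rightarrow> real^3) \<Rightarrow> real \<Rightarrow> real^3" where
  "central_normal q t = (1 / mnorm (vd q t)) *\<^sub>R vd q t"

definition asym_normal :: "(real \<Rightarrow> real^3) \<Rightarrow> real \<Rightarrow> real^3" where
  "asym_normal q t = (1 / mnorm (vd q t)) *\<^sub>R lcross (vd q t) (q t)"

definition dist_param :: "(real \<Rightarrow> real^3) \<Rightarrow> (real \<Rightarrow> real^3) \<Rightarrow> real \<Rightarrow> real" where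
  "dist_param c q t = det3 (vd c t) (q t) (vd q t) / mink (vd q t) (vd q t)"

text \<open>phi(s,v) = c(s) + v q(s), s in I, is a ruled surface whose base curve c is its
  striction curve: c and q differentiable, c regular (non-null tangent, so that it admits an
  arc-length parametrisation), q a unit non-null vector field, dq/ds non-null, and
  <dq/ds, dc/ds> = 0.\<close>
definition ruled_surface_on :: "real set \<Rightarrow> (real \<Rightarrow> real^3) \<Rightarrow> (real \<Rightarrow> real^3) \<Rightarrow> bool" where
  "ruled_surface_on I c q \<longleftrightarrow>
     (\<forall>t\<in>I. c differentiable (at t) \<and> q differentiable (at t)
        \<and> mink (vd c t) (vd c t) \<noteq> 0
        \<and> \<bar>mink (q t) (q t)\<bar> = 1
        \<and> mink (vd q t) (vd q t) \<noteq> 0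
        \<and> mink (vd q t) (vd c t) = 0)"

definition developable_on :: "real set \<Rightarrow> (real \<Rightarrow> real^3) \<Rightarrow> (real \<Rightarrow> real^3) \<Rightarrow> bool" where
  "developable_on I c q \<longleftrightarrow> (\<forall>t\<in>I. dist_param c q t = 0)"

definition type_M1_minus_on :: "real set \<Rightarrow> (real \<Rightarrow> real^3) \<Rightarrow> bool" where
  "type_M1_minus_on I q \<longleftrightarrow> (\<forall>t\<in>I. timelike (q t) \<and> spacelike (central_normal q t))"

definition type_M1_plus_on :: "real set \<Rightarrow> (real \<Rightarrow> real^3) \<Rightarrow> bool" where
  "type_M1_plus_on I q \<longleftrightarrow> (\<forall>t\<in>I. spacelike (q t) \<and> spacelike (central_normal q t))"

text \<open>phi* = c* + v q* is a Mannheim offset of phi = c + v q (rulings corresponding via the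
  common parameter s): h* = a.\<close>
definition mannheim_offset_on :: "real set \<Rightarrow> (real \<Rightarrow> real^3) \<Rightarrow> (real \<Rightarrow> real^3) \<Rightarrow> bool" where
  "mannheim_offset_on I qs q \<longleftrightarrow> (\<forall>t\<in>I. central_normal qs t = asym_normal q t)"

end

theory Submission
  imports Defs
begin


lemma vec3_eq: "(x::real^3) = y \<longleftrightarrow> x$1 = y$1 \<and> x$2 = y$2 \<and> x$3 = y$3"
  by (simp add: vec_eq_iff forall_3)

lemma lcross_comp[simp]: "lcross x y $ 1 = x$2 * y$3 - x$3 * y$2"
  "lcross x y $ 2 = x$1 * y$3 - x$3 * y$1" "lcross x y $ 3 = x$2 * y$1 - x$1 * y$2"
  by (simp_all add: lcross_def)

lemma lcross_lcross: "lcross (lcross x y) z = mink y z *\<^sub>R x - mink x z *\<^sub>R y"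
  by (simp add: vec3_eq mink_def algebra_simps)

lemma mink_lcross_det: "mink (lcross x y) z = - det3 x y z"
  by (simp add: mink_def det3_def algebra_simps)

lemma mink_lcross_self: "mink (lcross x y) (lcross x y) = (mink x y)^2 - mink x x * mink y y"
  by (simp add: mink_def power2_eq_square algebra_simps)

lemma lcross_anti: "lcross x y = - lcross y x"
  by (simp add: vec3_eq algebra_simps)

lemma det3_cyc: "det3 x y z = det3 y z x" by (simp add: det3_def algebra_simps)

lemma cramer: "det3 q h a *\<^sub>R v = det3 v h a *\<^sub>R q + det3 q v a *\<^sub>R h + det3 q h v *\<^sub>R a"
  by (simp add: vec3_eq det3_def algebra_simps)

lemma bilinear_mink: "bilinear mink"
  by (auto simp: bilinear_def linear_iff mink_def algebra_simps)

lemma bilinear_lcross: "bilinear lcross"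
  by (auto simp: bilinear_def linear_iff vec3_eq algebra_simps)

lemma mink_sym: "mink x y = mink y x" by (simp add: mink_def algebra_simps)
lemma mink_scale[simp]: "mink (r *\<^sub>R x) y = r * mink x y" "mink x (r *\<^sub>R y) = r * mink x y"
  by (simp_all add: mink_def algebra_simps)
lemma mink_add[simp]: "mink (x + y) z = mink x z + mink y z" "mink z (x + y) = mink z x + mink z y"
  by (simp_all add: mink_def algebra_simps)
lemma mink_diff[simp]: "mink (x - y) z = mink x z - mink y z" "mink z (x - y) = mink z x - mink z y"
  by (simp_all add: mink_def algebra_simps)
lemma mink_neg[simp]: "mink (- x) z = - mink x z" "mink z (- x) = - mink z x"
  by (simp_all add: mink_def algebra_simps)
lemma lcross_scale[simp]: "lcross (r *\<^sub>R x) y = r *\<^sub>R lcross x y" "lcross x (r *\<^sub>R y) = r *\<^sub>R lcross x y"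
  by (simp_all add: vec3_eq algebra_simps)
lemma lcross_add[simp]: "lcross (x + y) z = lcross x z + lcross y z" "lcross z (x + y) = lcross z x + lcross z y"
  by (simp_all add: vec3_eq algebra_simps)
lemma lcross_self[simp]: "lcross x x = 0" by (simp add: vec3_eq)
lemma det3_scale3: "det3 x y (r *\<^sub>R z) = r * det3 x y z" by (simp add: det3_def algebra_simps)
lemma det3_same: "det3 x x z = 0" by (simp add: det3_def algebra_simps)

lemma mink_lcross_x[simp]: "mink (lcross x y) x = 0" "mink (lcross x y) y = 0"
  by (simp_all add: mink_def algebra_simps)

lemma frame_decomp:
  assumes "mink q q = -1" "mink h h = 1" "mink q h = 0"
  shows "v = (- mink q v) *\<^sub>R q + mink h v *\<^sub>R h + mink (lcross h q) v *\<^sub>R lcross h q"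
proof -
  define a where "a = lcross h q"
  have qh: "mink h q = 0" using assms mink_sym by metis
  have "det3 q h a = - mink (lcross q h) a" by (simp add: mink_lcross_det)
  also have "\<dots> = mink a a" by (subst lcross_anti) (simp add: a_def)
  also have "\<dots> = 1" unfolding a_def mink_lcross_self using assms qh by simp
  finally have d: "det3 q h a = 1" .
  have ha: "lcross h a = q"
    using lcross_lcross[of h q h] lcross_anti[of h a] assms qh by (simp add: a_def)
  have aq: "lcross a q = - h"
    using lcross_lcross[of h q q] assms qh by (simp add: a_def)
  have 1: "det3 v h a = - mink q v"
    using det3_cyc[of v h a] mink_lcross_det[of h a v] ha by simp
  have 2: "det3 q v a = mink h v"
    using det3_cyc[of q v a] det3_cyc[of v a q] mink_lcross_det[of a q v] aq by simp
  have 3: "det3 q h v = mink a v"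
    using mink_lcross_det[of q h v] lcross_anti[of q h] by (simp add: a_def)
  show ?thesis using cramer[of q h a v] d 1 2 3 by (simp add: a_def)
qed

lemma mink_vderiv:
  assumes "(f has_vector_derivative f') (at x)" "(g has_vector_derivative g') (at x)"
  shows "((\<lambda>t. mink (f t) (g t)) has_real_derivative (mink (f x) g' + mink f' (g x))) (at x)"
  using bounded_bilinear.has_vector_derivative[OF bilinear_mink[unfolded bilinear_conv_bounded_bilinear] assms]
  by (simp add: has_real_derivative_iff_has_vector_derivative)

lemma lcross_vderiv:
  assumes "(f has_vector_derivative f') (at x)" "(g has_vector_derivative g') (at x)"
  shows "((\<lambda>t. lcross (f t) (g t)) has_vector_derivative (lcross (f x) g' + lcross f' (g x))) (at x)"
  using bounded_bilinear.has_vector_derivative[OF bilinear_lcross[unfolded bilinear_conv_bounded_bilinear] assms] .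

lemma const_deriv_zero:
  assumes "open I" "s \<in> I" "\<And>t. t \<in> I \<Longrightarrow> g t = k" "(g has_real_derivative d) (at s)"
  shows "d = 0"
proof -
  have ev: "eventually (\<lambda>t. g t = k) (nhds s)"
    using eventually_nhds_in_open[OF assms(1,2)] by (rule eventually_mono) (use assms(3) in auto)
  have "((\<lambda>t. k) has_real_derivative d) (at s)"
    using DERIV_cong_ev[OF refl ev refl] assms(4) by simp
  then show ?thesis using DERIV_const DERIV_unique by blast
qed

lemma inv_half: "inverse (a::real) / 2 * b = b / (2 * a)" by (simp add: field_simps)
lemma inv_abs_sgn: "(y::real) \<noteq> 0 \<Longrightarrow> inverse \<bar>y\<bar> / 2 * (2 * y * d) = sgn y * d"
proof (cases "y > 0")
  case True then show ?thesis by (simp add: field_simps)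
next
  case False
  assume "y \<noteq> 0"
  with False have "y < 0" by simp
  then show ?thesis by (simp add: field_simps)
qed

lemma sqrt_abs_deriv:
  assumes "(g has_real_derivative d) (at x)" "g x \<noteq> 0"
  shows "((\<lambda>t. sqrt \<bar>g t\<bar>) has_real_derivative (sgn (g x) * d / (2 * sqrt \<bar>g x\<bar>))) (at x)"
proof -
  have e: "(\<lambda>t. sqrt \<bar>g t\<bar>) = (\<lambda>t. sqrt (sqrt ((g t)\<^sup>2)))" by simp
  have p: "0 < (g x)\<^sup>2" using assms(2) by simp
  have d1: "((\<lambda>t. (g t)\<^sup>2) has_real_derivative (2 * g x * d)) (at x)"
    using DERIV_power[OF assms(1), of 2] by (simp add: ac_simps)
  have d2: "((\<lambda>t. sqrt ((g t)\<^sup>2)) has_real_derivative (inverse (sqrt ((g x)\<^sup>2)) / 2 * (2 * g x * d))) (at x)"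
    by (rule DERIV_chain2[OF DERIV_real_sqrt[OF p] d1])
  have p2: "0 < sqrt ((g x)\<^sup>2)" using p by simp
  have "((\<lambda>t. sqrt (sqrt ((g t)\<^sup>2))) has_real_derivative
      (inverse (sqrt (sqrt ((g x)\<^sup>2))) / 2 * (inverse (sqrt ((g x)\<^sup>2)) / 2 * (2 * g x * d)))) (at x)"
    by (rule DERIV_chain2[OF DERIV_real_sqrt[OF p2] d2])
  moreover have "inverse (sqrt (sqrt ((g x)\<^sup>2))) / 2 * (inverse (sqrt ((g x)\<^sup>2)) / 2 * (2 * g x * d))
      = sgn (g x) * d / (2 * sqrt \<bar>g x\<bar>)"
  proof -
    have r: "sqrt ((g x)\<^sup>2) = \<bar>g x\<bar>" by (rule real_sqrt_abs)
    have s: "inverse \<bar>g x\<bar> / 2 * (2 * g x * d) = sgn (g x) * d"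
      using assms(2) by (rule inv_abs_sgn)
    show ?thesis unfolding r s by (rule inv_half)
  qed
  ultimately show ?thesis by (simp only: e)
qed

lemma lcross_diff[simp]: "lcross (x - y) z = lcross x z - lcross y z" "lcross z (x - y) = lcross z x - lcross z y"
  by (simp_all add: vec3_eq algebra_simps)
lemma lcross_neg[simp]: "lcross (- x) z = - lcross x z" "lcross z (- x) = - lcross z x"
  by (simp_all add: vec3_eq algebra_simps)
lemma det3_cyc2: "det3 x y z = det3 z x y" by (simp add: det3_def algebra_simps)
lemma det3_neg3: "det3 x y (- z) = - det3 x y z" by (simp add: det3_def algebra_simps)

lemma det3_scale2: "det3 x (r *\<^sub>R y) z = r * det3 x y z" by (simp add: det3_def algebra_simps)

lemma sign_const:
  fixes g :: "real \<Rightarrow> real"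
  assumes iv: "is_interval I" and ct: "\<And>t. t \<in> I \<Longrightarrow> isCont g t" and nz: "\<And>t. t \<in> I \<Longrightarrow> g t \<noteq> 0"
  shows "(\<forall>t\<in>I. g t > 0) \<or> (\<forall>t\<in>I. g t < 0)"
proof (rule ccontr)
  have sub: "z \<in> I" if "x \<in> I" "y \<in> I" "x \<le> z" "z \<le> y" for x y z
    using iv that unfolding is_interval_1 by blast
  have F1: False if "x \<in> I" "y \<in> I" "x \<le> y" "g x < 0" "g y > 0" for x y
  proof -
    have "\<exists>z. x \<le> z \<and> z \<le> y \<and> g z = 0"
      by (rule IVT) (use that in \<open>auto intro: ct sub[OF \<open>x \<in> I\<close> \<open>y \<in> I\<close>]\<close>)
    then obtain z where "x \<le> z" "z \<le> y" "g z = 0" by blast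
    then show False using sub[OF that(1,2)] nz by blast
  qed
  have F2: False if "x \<in> I" "y \<in> I" "x \<le> y" "g x > 0" "g y < 0" for x y
  proof -
    have "\<exists>z. x \<le> z \<and> z \<le> y \<and> g z = 0"
      by (rule IVT2) (use that in \<open>auto intro: ct sub[OF \<open>x \<in> I\<close> \<open>y \<in> I\<close>]\<close>)
    then obtain z where "x \<le> z" "z \<le> y" "g z = 0" by blast
    then show False using sub[OF that(1,2)] nz by blast
  qed
  assume "\<not> ?thesis"
  then obtain a b where a0: "a \<in> I" "\<not> g a > 0" and b0: "b \<in> I" "\<not> g b < 0"
    by blast
  have a: "a \<in> I" "g a < 0" using a0 nz[of a] by auto
  have b: "b \<in> I" "g b > 0" using b0 nz[of b] by auto
  show False
  proof (cases "a \<le> b")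
    case True then show ?thesis using F1 a b by blast
  next
    case False then show ?thesis using F2[of b a] a b by simp
  qed
qed




context
  fixes I :: "real set" and c q :: "real \<Rightarrow> real^3" and s1 \<kappa> :: "real \<Rightarrow> real"
  assumes I: "open I"
    and surf: "ruled_surface_on I c q"
    and arclen: "\<forall>s\<in>I. \<bar>mink (vd c s) (vd c s)\<bar> = 1"
    and orient: "\<forall>s\<in>I. mink (vd c s) (q s) < 0"
    and regular: "\<forall>s\<in>I. vd q differentiable (at s) \<and> vd (vd q) differentiable (at s)"
    and type_phi: "type_M1_minus_on I q"
    and dev: "developable_on I c q"
    and s1: "\<forall>s\<in>I. (s1 has_real_derivative mnorm (vd q s)) (at s)"
    and kappa: "\<forall>s\<in>I. vd (central_normal q) s
                  = deriv s1 s *\<^sub>R (q s + \<kappa> s *\<^sub>R asym_normal q s)"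
begin

lemma q_qq: "t \<in> I \<Longrightarrow> mink (q t) (q t) = -1"
  using surf type_phi unfolding ruled_surface_on_def type_M1_minus_on_def timelike_def by force

lemma vdq_pos: "t \<in> I \<Longrightarrow> mink (vd q t) (vd q t) > 0"
proof -
  assume t: "t \<in> I"
  have "0 < mink (central_normal q t) (central_normal q t)"
    using type_phi t unfolding type_M1_minus_on_def spacelike_def by blast
  also have "\<dots> = (1 / mnorm (vd q t))\<^sup>2 * mink (vd q t) (vd q t)"
    by (simp add: central_normal_def power2_eq_square)
  finally show ?thesis by (simp add: zero_less_mult_iff)
qed

lemma m_pos: "t \<in> I \<Longrightarrow> mnorm (vd q t) > 0"
  using vdq_pos[of t] by (simp add: mnorm_def)

lemma m_sq: "t \<in> I \<Longrightarrow> (mnorm (vd q t))\<^sup>2 = mink (vd q t) (vd q t)"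
  using vdq_pos[of t] by (simp add: mnorm_def)

lemma vdq_h: "t \<in> I \<Longrightarrow> vd q t = mnorm (vd q t) *\<^sub>R central_normal q t"
  using m_pos[of t] by (simp add: central_normal_def)

lemma hh: "t \<in> I \<Longrightarrow> mink (central_normal q t) (central_normal q t) = 1"
proof -
  assume t: "t \<in> I"
  have "mink (central_normal q t) (central_normal q t) = mink (vd q t) (vd q t) / (mnorm (vd q t))\<^sup>2"
    by (simp add: central_normal_def power2_eq_square)
  then show ?thesis using m_sq[OF t] vdq_pos[OF t] by simp
qed

lemma q_has: "t \<in> I \<Longrightarrow> (q has_vector_derivative vd q t) (at t)"
  using surf unfolding ruled_surface_on_def vd_def by (simp add: vector_derivative_works[symmetric])

lemma c_has: "t \<in> I \<Longrightarrow> (c has_vector_derivative vd c t) (at t)"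
  using surf unfolding ruled_surface_on_def vd_def by (simp add: vector_derivative_works[symmetric])

lemma vdq_has: "t \<in> I \<Longrightarrow> (vd q has_vector_derivative vd (vd q) t) (at t)"
  using regular unfolding vd_def by (simp add: vector_derivative_works[symmetric])

lemma vdvdq_has: "t \<in> I \<Longrightarrow> (vd (vd q) has_vector_derivative vd (vd (vd q)) t) (at t)"
  using regular unfolding vd_def by (simp add: vector_derivative_works[symmetric])

lemma q_vdq: "t \<in> I \<Longrightarrow> mink (q t) (vd q t) = 0"
proof -
  assume t: "t \<in> I"
  have "mink (q t) (vd q t) + mink (vd q t) (q t) = 0"
    by (rule const_deriv_zero[OF I t q_qq mink_vderiv[OF q_has[OF t] q_has[OF t]]])
  then show ?thesis by (simp add: mink_sym[of "vd q t"])
qed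

lemma qh: "t \<in> I \<Longrightarrow> mink (q t) (central_normal q t) = 0"
  using q_vdq by (simp add: central_normal_def)

lemma a_eq: "asym_normal q t = lcross (central_normal q t) (q t)"
  by (simp add: asym_normal_def central_normal_def)

lemma frame_q: "t \<in> I \<Longrightarrow> mink (q t) (asym_normal q t) = 0"
  using a_eq mink_lcross_x mink_sym by metis
lemma frame_h: "t \<in> I \<Longrightarrow> mink (central_normal q t) (asym_normal q t) = 0"
  using a_eq mink_lcross_x mink_sym by metis
lemma frame_a: "t \<in> I \<Longrightarrow> mink (asym_normal q t) (asym_normal q t) = 1"
  unfolding a_eq mink_lcross_self using q_qq hh qh mink_sym by (metis diff_minus_eq_add mult_minus1_right power2_eq_square mult_zero_left add_0)

lemma decomp: "t \<in> I \<Longrightarrow> v = (- mink (q t) v) *\<^sub>R q t + mink (central_normal q t) v *\<^sub>R central_normal q t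
     + mink (asym_normal q t) v *\<^sub>R asym_normal q t"
  unfolding a_eq by (rule frame_decomp[OF q_qq hh qh])

lemma vdc: "t \<in> I \<Longrightarrow> vd c t = q t"
proof -
  assume t: "t \<in> I"
  define v where "v = vd c t"
  have hv: "mink (central_normal q t) v = 0"
    using surf t m_pos[OF t] unfolding ruled_surface_on_def v_def
    by (simp add: central_normal_def mink_sym)
  have "det3 v (q t) (vd q t) = 0"
    using dev surf t unfolding developable_on_def dist_param_def ruled_surface_on_def v_def by auto
  then have "det3 v (q t) (central_normal q t) = 0"
    using m_pos[OF t] by (simp add: central_normal_def det3_scale3)
  then have av: "mink (asym_normal q t) v = 0"
    unfolding a_eq using det3_cyc[of v "q t"] mink_lcross_det[of "q t" "central_normal q t" v]
      lcross_anti[of "q t" "central_normal q t"] by simp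
  have ve: "v = (- mink (q t) v) *\<^sub>R q t" using decomp[OF t, of v] hv av by simp
  then have "mink v v = - (mink (q t) v)\<^sup>2" using q_qq[OF t]
    by (metis mink_scale power2_eq_square mult.assoc mult_minus1_right mult_minus_left mult_minus_right)
  moreover have "\<bar>mink v v\<bar> = 1" using arclen t v_def by simp
  moreover have "mink (q t) v < 0" using orient t v_def mink_sym by metis
  ultimately have "mink (q t) v = -1"
    by (smt (verit) power2_eq_square mult_le_cancel_left2 mult_minus_right)
  then show ?thesis using ve v_def by simp
qed


lemma m_has: "t \<in> I \<Longrightarrow> ((\<lambda>t. mnorm (vd q t)) has_real_derivative
    (mink (vd q t) (vd (vd q) t) / mnorm (vd q t))) (at t)"
proof -
  assume t: "t \<in> I"
  have d: "((\<lambda>t. mink (vd q t) (vd q t)) has_real_derivative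
      (mink (vd q t) (vd (vd q) t) + mink (vd (vd q) t) (vd q t))) (at t)"
    by (rule mink_vderiv[OF vdq_has[OF t] vdq_has[OF t]])
  have p: "mink (vd q t) (vd q t) > 0" using vdq_pos[OF t] .
  have "sgn (mink (vd q t) (vd q t)) * (mink (vd q t) (vd (vd q) t) + mink (vd (vd q) t) (vd q t))
      / (2 * sqrt \<bar>mink (vd q t) (vd q t)\<bar>) = mink (vd q t) (vd (vd q) t) / mnorm (vd q t)"
    using p by (simp add: mnorm_def mink_sym[of "vd (vd q) t"])
  then show ?thesis using sqrt_abs_deriv[OF d] p unfolding mnorm_def by simp
qed

lemma ds1: "t \<in> I \<Longrightarrow> deriv s1 t = mnorm (vd q t)"
  using s1 DERIV_imp_deriv by blast

lemma dds1: "t \<in> I \<Longrightarrow> deriv (deriv s1) t = mink (vd q t) (vd (vd q) t) / mnorm (vd q t)"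
proof -
  assume t: "t \<in> I"
  have ev: "eventually (\<lambda>x. mnorm (vd q x) = deriv s1 x) (nhds t)"
    using eventually_nhds_in_open[OF I t] by (rule eventually_mono) (simp add: ds1)
  have "(deriv s1 has_real_derivative (mink (vd q t) (vd (vd q) t) / mnorm (vd q t))) (at t)"
    using DERIV_cong_ev[OF refl ev refl] m_has[OF t] by simp
  then show ?thesis by (rule DERIV_imp_deriv)
qed

lemma h_fun: "central_normal q = (\<lambda>t. inverse (mnorm (vd q t)) *\<^sub>R vd q t)"
  by (simp add: fun_eq_iff central_normal_def divide_inverse)

lemma h_has: "t \<in> I \<Longrightarrow> (central_normal q has_vector_derivative
   (inverse (mnorm (vd q t)) *\<^sub>R vd (vd q) t
    + (- ((mink (vd q t) (vd (vd q) t) / mnorm (vd q t)) * inverse (mnorm (vd q t) ^ Suc (Suc 0)))) *\<^sub>R vd q t)) (at t)"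
proof -
  assume t: "t \<in> I"
  have nz: "mnorm (vd q t) \<noteq> 0" using m_pos[OF t] by simp
  show ?thesis unfolding h_fun
    by (rule has_vector_derivative_scaleR[OF DERIV_inverse_fun[OF m_has[OF t] nz] vdq_has[OF t]])
qed

lemma h_vd: "t \<in> I \<Longrightarrow> vd (central_normal q) t =
   inverse (mnorm (vd q t)) *\<^sub>R vd (vd q) t
    + (- ((mink (vd q t) (vd (vd q) t) / mnorm (vd q t)) * inverse (mnorm (vd q t) ^ Suc (Suc 0)))) *\<^sub>R vd q t"
  unfolding vd_def by (rule vector_derivative_at[OF h_has[unfolded vd_def]])

lemma h_has2: "t \<in> I \<Longrightarrow> (central_normal q has_vector_derivative
   mnorm (vd q t) *\<^sub>R (q t + \<kappa> t *\<^sub>R asym_normal q t)) (at t)"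
  using h_has[of t] h_vd[of t] kappa ds1[of t] by auto

lemma a_has: "t \<in> I \<Longrightarrow> (asym_normal q has_vector_derivative
   (- (mnorm (vd q t) * \<kappa> t)) *\<^sub>R central_normal q t) (at t)"
proof -
  assume t: "t \<in> I"
  have af: "asym_normal q = (\<lambda>t. lcross (central_normal q t) (q t))" using a_eq by auto
  have aq: "lcross (asym_normal q t) (q t) = - central_normal q t"
    unfolding a_eq using lcross_lcross[of "central_normal q t" "q t" "q t"] q_qq[OF t] qh[OF t]
      mink_sym[of "central_normal q t" "q t"] by simp
  have "(asym_normal q has_vector_derivative
     lcross (central_normal q t) (vd q t) + lcross (mnorm (vd q t) *\<^sub>R (q t + \<kappa> t *\<^sub>R asym_normal q t)) (q t)) (at t)"
    by (rule has_vector_derivative_transform_within_open[OF lcross_vderiv[OF h_has2[OF t] q_has[OF t]] I t])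
      (simp add: a_eq)
  moreover have "lcross (central_normal q t) (vd q t) + lcross (mnorm (vd q t) *\<^sub>R (q t + \<kappa> t *\<^sub>R asym_normal q t)) (q t)
     = (- (mnorm (vd q t) * \<kappa> t)) *\<^sub>R central_normal q t"
  proof -
    have z: "lcross (central_normal q t) (vd q t) = 0" by (subst vdq_h[OF t]) simp
    show ?thesis using z aq by simp
  qed
  ultimately show ?thesis by simp
qed

lemma mink_differentiable:
  fixes f g :: "real \<Rightarrow> real^3"
  assumes "f differentiable (at x)" "g differentiable (at x)"
  shows "(\<lambda>t. mink (f t) (g t)) differentiable (at x)"
proof -
  have "(f has_vector_derivative vector_derivative f (at x)) (at x)"
       "(g has_vector_derivative vector_derivative g (at x)) (at x)"
    using assms vector_derivative_works by blast+
  from mink_vderiv[OF this] show ?thesis using real_differentiable_def by blast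
qed

lemma kappa_val: "t \<in> I \<Longrightarrow> \<kappa> t = mink (vd (central_normal q) t) (asym_normal q t) / mnorm (vd q t)"
  using kappa ds1[of t] frame_q[of t] frame_a[of t] m_pos[of t] by simp

lemma kappa_has: "t \<in> I \<Longrightarrow> (\<kappa> has_real_derivative deriv \<kappa> t) (at t)"
proof -
  assume t: "t \<in> I"
  define F where "F = (\<lambda>t. mink (inverse (mnorm (vd q t)) *\<^sub>R vd (vd q) t
    + (- ((mink (vd q t) (vd (vd q) t) / mnorm (vd q t)) * inverse (mnorm (vd q t) ^ Suc (Suc 0)))) *\<^sub>R vd q t)
     (asym_normal q t) / mnorm (vd q t))"
  have md: "(\<lambda>t. mnorm (vd q t)) differentiable (at t)"
    using m_has[OF t] real_differentiable_def by blast
  have qd: "vd q differentiable (at t)" "vd (vd q) differentiable (at t)"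
    using vdq_has[OF t] vdvdq_has[OF t] differentiableI_vector by blast+
  have ad: "asym_normal q differentiable (at t)"
    using a_has[OF t] differentiableI_vector by blast
  have mnz: "mnorm (vd q t) \<noteq> 0" using m_pos[OF t] by simp
  have "F differentiable (at t)"
    unfolding F_def
    by (intro differentiable_divide mink_differentiable differentiable_add differentiable_scaleR
        differentiable_inverse differentiable_minus differentiable_mult differentiable_power md qd ad mnz)
      (simp_all add: mnz)
  then have "(F has_real_derivative deriv F t) (at t)" by (simp add: DERIV_deriv_iff_real_differentiable)
  then have d: "(\<kappa> has_real_derivative deriv F t) (at t)"
    by (rule has_field_derivative_transform_within_open[OF _ I t])
      (simp add: F_def kappa_val h_vd)
  then show ?thesis using DERIV_imp_deriv by metis
qed


lemma K_has: "t \<in> I \<Longrightarrow> ((\<lambda>t. R * mnorm (vd q t) * \<kappa> t) has_real_derivative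
   (R * (mink (vd q t) (vd (vd q) t) / mnorm (vd q t) * \<kappa> t + mnorm (vd q t) * deriv \<kappa> t))) (at t)"
  by (auto intro!: derivative_eq_intros m_has kappa_has simp: algebra_simps)

lemma cs_has: "t \<in> I \<Longrightarrow> ((\<lambda>s. c s + R *\<^sub>R asym_normal q s) has_vector_derivative
   (q t - (R * mnorm (vd q t) * \<kappa> t) *\<^sub>R central_normal q t)) (at t)"
proof -
  assume t: "t \<in> I"
  have "((\<lambda>s. c s + R *\<^sub>R asym_normal q s) has_vector_derivative
     (vd c t + (R *\<^sub>R ((- (mnorm (vd q t) * \<kappa> t)) *\<^sub>R central_normal q t) + 0 *\<^sub>R asym_normal q t))) (at t)"
    by (rule has_vector_derivative_add[OF c_has[OF t] has_vector_derivative_scaleR[OF DERIV_const a_has[OF t]]])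
  then show ?thesis using vdc[OF t] by (simp add: algebra_simps)
qed

lemma u_has: "t \<in> I \<Longrightarrow> ((\<lambda>t. q t - (R * mnorm (vd q t) * \<kappa> t) *\<^sub>R central_normal q t) has_vector_derivative
   (vd q t - ((R * mnorm (vd q t) * \<kappa> t) *\<^sub>R (mnorm (vd q t) *\<^sub>R (q t + \<kappa> t *\<^sub>R asym_normal q t))
     + (R * (mink (vd q t) (vd (vd q) t) / mnorm (vd q t) * \<kappa> t + mnorm (vd q t) * deriv \<kappa> t)) *\<^sub>R central_normal q t))) (at t)"
  by (rule has_vector_derivative_diff[OF q_has has_vector_derivative_scaleR[OF K_has h_has2]])

lemma w_has: "t \<in> I \<Longrightarrow> ((\<lambda>t. central_normal q t - (R * mnorm (vd q t) * \<kappa> t) *\<^sub>R q t) has_vector_derivative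
   (mnorm (vd q t) *\<^sub>R (q t + \<kappa> t *\<^sub>R asym_normal q t) - ((R * mnorm (vd q t) * \<kappa> t) *\<^sub>R vd q t
     + (R * (mink (vd q t) (vd (vd q) t) / mnorm (vd q t) * \<kappa> t + mnorm (vd q t) * deriv \<kappa> t)) *\<^sub>R q t))) (at t)"
  by (rule has_vector_derivative_diff[OF h_has2 has_vector_derivative_scaleR[OF K_has q_has]])

lemma ah: "t \<in> I \<Longrightarrow> lcross (asym_normal q t) (central_normal q t) = - q t"
  unfolding a_eq using lcross_lcross[of "central_normal q t" "q t" "central_normal q t"] hh[of t] qh[of t]
  by simp

lemma aq: "t \<in> I \<Longrightarrow> lcross (asym_normal q t) (q t) = - central_normal q t"
    unfolding a_eq using lcross_lcross[of "central_normal q t" "q t" "q t"] q_qq[of t] qh[of t]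
      mink_sym[of "central_normal q t" "q t"] by simp


lemma fwd:
  assumes t: "t \<in> I" and R: "R \<noteq> 0"
    and rs: "ruled_surface_on I (\<lambda>s. c s + R *\<^sub>R asym_normal q s) qs"
    and dv: "developable_on I (\<lambda>s. c s + R *\<^sub>R asym_normal q s) qs"
    and mo: "mannheim_offset_on I qs q"
  shows "deriv \<kappa> t = - (1 / R) * (R\<^sup>2 * (\<kappa> t)\<^sup>2 * (deriv s1 t)\<^sup>2 - 1)
                  - (1 / deriv s1 t) * deriv (deriv s1) t * \<kappa> t"
proof -
  define m where "m = (\<lambda>t. mnorm (vd q t))"
  define K where "K = (\<lambda>t. R * mnorm (vd q t) * \<kappa> t)"
  define h where "h = central_normal q"
  define a where "a = asym_normal q"
  define u where "u = (\<lambda>t. q t - (R * mnorm (vd q t) * \<kappa> t) *\<^sub>R central_normal q t)"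
  define w where "w = (\<lambda>t. central_normal q t - (R * mnorm (vd q t) * \<kappa> t) *\<^sub>R q t)"
  have qs_has: "(qs has_vector_derivative vd qs y) (at y)" if "y \<in> I" for y
    using rs that unfolding ruled_surface_on_def vd_def by (simp add: vector_derivative_works[symmetric])
  have vqs: "vd qs y = mnorm (vd qs y) *\<^sub>R a y" and npos: "mnorm (vd qs y) > 0" if y: "y \<in> I" for y
  proof -
    have "mink (vd qs y) (vd qs y) \<noteq> 0" using rs y unfolding ruled_surface_on_def by blast
    then show np: "mnorm (vd qs y) > 0" by (simp add: mnorm_def)
    have e: "(1 / mnorm (vd qs y)) *\<^sub>R vd qs y = a y"
      using mo y unfolding mannheim_offset_on_def central_normal_def a_def by blast
    have "vd qs y = mnorm (vd qs y) *\<^sub>R ((1 / mnorm (vd qs y)) *\<^sub>R vd qs y)" using np by simp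
    then show "vd qs y = mnorm (vd qs y) *\<^sub>R a y" unfolding e .
  qed
  have vcs: "vd (\<lambda>s. c s + R *\<^sub>R asym_normal q s) y = u y" if y: "y \<in> I" for y
    using vector_derivative_at[OF cs_has[OF y]] unfolding vd_def u_def .
  have P1: "mink (qs y) (w y) = 0" if y: "y \<in> I" for y
  proof -
    have "dist_param (\<lambda>s. c s + R *\<^sub>R asym_normal q s) qs y = 0" using dv y unfolding developable_on_def by blast
    moreover have "mink (vd qs y) (vd qs y) \<noteq> 0" using rs y unfolding ruled_surface_on_def by blast
    ultimately have "det3 (u y) (qs y) (vd qs y) = 0" unfolding dist_param_def vcs[OF y] by simp
    moreover obtain n where n: "mnorm (vd qs y) = n" by simp
    ultimately have d0: "det3 (u y) (qs y) (a y) = 0" using npos[OF y] vqs[OF y] by (simp add: det3_scale3)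
    have la: "lcross (a y) (u y) = - w y"
      unfolding a_def u_def w_def using aq[OF y] ah[OF y] by simp
    have "det3 (u y) (qs y) (a y) = det3 (a y) (u y) (qs y)" by (rule det3_cyc2)
    also have "\<dots> = - mink (lcross (a y) (u y)) (qs y)" by (simp add: mink_lcross_det)
    also have "\<dots> = mink (w y) (qs y)" unfolding la by simp
    finally show ?thesis using d0 mink_sym by metis
  qed
  have M1: "\<bar>mink (qs y) (qs y)\<bar> = 1" if "y \<in> I" for y
    using rs that unfolding ruled_surface_on_def by blast
  have Z: "mink (qs t) (a t) = 0"
  proof -
    have "(mink (qs t) (vd qs t) + mink (vd qs t) (qs t)) * mink (qs t) (qs t)
        + mink (qs t) (qs t) * (mink (qs t) (vd qs t) + mink (vd qs t) (qs t)) = 0"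
      apply (rule const_deriv_zero[OF I t, where g="\<lambda>y. mink (qs y) (qs y) * mink (qs y) (qs y)" and k=1])
      subgoal for y
      proof -
        assume y: "y \<in> I"
        have "\<bar>mink (qs y) (qs y)\<bar> * \<bar>mink (qs y) (qs y)\<bar> = 1" using M1[OF y] by simp
        then show ?thesis by (simp only: abs_mult_self_eq)
      qed
      by (rule DERIV_cong[OF DERIV_mult[OF mink_vderiv[OF qs_has[OF t] qs_has[OF t]] mink_vderiv[OF qs_has[OF t] qs_has[OF t]]]])
        (simp add: algebra_simps)
    then have "4 * mink (qs t) (vd qs t) * mink (qs t) (qs t) = 0"
      by (simp add: mink_sym[of "vd qs t"] algebra_simps)
    moreover have "mink (qs t) (qs t) \<noteq> 0" using M1[OF t] by auto
    ultimately have "mink (qs t) (vd qs t) = 0" by simp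
    moreover obtain n where n: "mnorm (vd qs t) = n" by simp
    ultimately show ?thesis using vqs[OF t] npos[OF t] by simp
  qed
  have D: "mink (qs t) (mnorm (vd q t) *\<^sub>R (q t + \<kappa> t *\<^sub>R asym_normal q t) - ((R * mnorm (vd q t) * \<kappa> t) *\<^sub>R vd q t
     + (R * (mink (vd q t) (vd (vd q) t) / mnorm (vd q t) * \<kappa> t + mnorm (vd q t) * deriv \<kappa> t)) *\<^sub>R q t))
     + mink (vd qs t) (w t) = 0"
    apply (rule const_deriv_zero[OF I t, where g="\<lambda>y. mink (qs y) (w y)" and k=0])
    using P1 apply blast
    unfolding w_def by (rule mink_vderiv[OF qs_has[OF t] w_has[OF t]])
  have aw: "mink (vd qs t) (w t) = 0"
  proof -
    obtain n where n: "mnorm (vd qs t) = n" by simp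
    have "mink (a t) (w t) = 0"
      unfolding w_def a_def using frame_h[OF t] frame_q[OF t] mink_sym by (metis mink_diff(2) mink_scale(2) mult_zero_right diff_zero)
    then show ?thesis using vqs[OF t] n by simp
  qed
  define X where "X = mink (qs t) (q t)"
  define Y where "Y = mink (qs t) (h t)"
  define K' where "K' = R * (mink (vd q t) (vd (vd q) t) / mnorm (vd q t) * \<kappa> t + mnorm (vd q t) * deriv \<kappa> t)"
  have Za: "mink (qs t) (asym_normal q t) = 0" using Z a_def by simp
  have qv: "mink (qs t) (vd q t) = mnorm (vd q t) * Y"
    unfolding Y_def h_def by (subst vdq_h[OF t]) simp
  have E1: "mnorm (vd q t) * X - (R * mnorm (vd q t) * \<kappa> t) * (mnorm (vd q t) * Y) - K' * X = 0"
    using D aw unfolding K'_def[symmetric] by (simp add: Za qv X_def algebra_simps)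
  have E2: "Y - K t * X = 0"
    using P1[OF t] unfolding w_def X_def Y_def K_def h_def by (simp add: algebra_simps)
  have Xnz: "X \<noteq> 0"
  proof
    assume X0: "X = 0"
    then have "Y = 0" using E2 by simp
    then have "qs t = 0"
      using decomp[OF t, of "qs t"] X0 Za unfolding X_def Y_def h_def by (simp add: mink_sym)
    then show False using M1[OF t] by (simp add: mink_def)
  qed
  have E: "m t - K t * K t * m t - K' = 0"
  proof -
    have Y: "Y = K t * X" using E2 by simp
    have "X * (m t - K t * K t * m t - K') = 0" using E1 unfolding Y by (simp add: K_def m_def algebra_simps)
    then show ?thesis using Xnz by simp
  qed
  have mp: "m t > 0" using m_pos[OF t] m_def by simp
  show ?thesis
    unfolding ds1[OF t] dds1[OF t]
    using E R mp unfolding K_def K'_def m_def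
    by (simp add: field_simps power2_eq_square)
qed


lemma Kp_val:
  assumes t: "t \<in> I" and R: "R \<noteq> 0"
    and ode: "deriv \<kappa> t = - (1 / R) * (R\<^sup>2 * (\<kappa> t)\<^sup>2 * (deriv s1 t)\<^sup>2 - 1)
                  - (1 / deriv s1 t) * deriv (deriv s1) t * \<kappa> t"
  shows "R * (mink (vd q t) (vd (vd q) t) / mnorm (vd q t) * \<kappa> t + mnorm (vd q t) * deriv \<kappa> t)
       = mnorm (vd q t) - R * R * \<kappa> t * \<kappa> t * mnorm (vd q t) * mnorm (vd q t) * mnorm (vd q t)"
proof -
  have mp: "mnorm (vd q t) > 0" using m_pos[OF t] .
  show ?thesis using ode unfolding ds1[OF t] dds1[OF t] using R mp
    by (simp add: field_simps power2_eq_square)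
qed

lemma u_has2:
  assumes t: "t \<in> I" and R: "R \<noteq> 0"
    and ode: "deriv \<kappa> t = - (1 / R) * (R\<^sup>2 * (\<kappa> t)\<^sup>2 * (deriv s1 t)\<^sup>2 - 1)
                  - (1 / deriv s1 t) * deriv (deriv s1) t * \<kappa> t"
  shows "((\<lambda>t. q t - (R * mnorm (vd q t) * \<kappa> t) *\<^sub>R central_normal q t) has_vector_derivative
     ((- (R * mnorm (vd q t) * mnorm (vd q t) * \<kappa> t)) *\<^sub>R (q t - (R * mnorm (vd q t) * \<kappa> t) *\<^sub>R central_normal q t)
       - (R * mnorm (vd q t) * mnorm (vd q t) * \<kappa> t * \<kappa> t) *\<^sub>R asym_normal q t)) (at t)"
proof -
  obtain mm where mm: "mnorm (vd q t) = mm" by simp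
  have vq: "vd q t = mm *\<^sub>R central_normal q t" using vdq_h[OF t] mm by simp
  show ?thesis
    apply (rule has_vector_derivative_eq_rhs[OF u_has[OF t]])
    unfolding Kp_val[OF t R ode]
    unfolding mm
    unfolding vq
    by (simp add: algebra_simps)
qed


lemma bwd:
  assumes Iint: "is_interval I" and R: "R \<noteq> 0"
    and ode: "\<forall>s\<in>I. deriv \<kappa> s
                = - (1 / R) * (R\<^sup>2 * (\<kappa> s)\<^sup>2 * (deriv s1 s)\<^sup>2 - 1)
                  - (1 / deriv s1 s) * deriv (deriv s1) s * \<kappa> s"
    and nondeg: "\<forall>s\<in>I. \<kappa> s \<noteq> 0 \<and> R\<^sup>2 * (\<kappa> s)\<^sup>2 * (deriv s1 s)\<^sup>2 \<noteq> 1"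
  shows "\<exists>qs. ruled_surface_on I (\<lambda>s. c s + R *\<^sub>R asym_normal q s) qs
              \<and> developable_on I (\<lambda>s. c s + R *\<^sub>R asym_normal q s) qs
              \<and> (type_M1_plus_on I qs \<or> type_M1_minus_on I qs)
              \<and> mannheim_offset_on I qs q"
proof -
  define U where "U = (\<lambda>t. q t - (R * mnorm (vd q t) * \<kappa> t) *\<^sub>R central_normal q t)"
  define g where "g = (\<lambda>t. mink (U t) (U t))"
  define N where "N = (\<lambda>t. sqrt \<bar>g t\<bar>)"
  define \<sigma> where "\<sigma> = - sgn R"
  define L where "L = (\<lambda>t. R * mnorm (vd q t) * mnorm (vd q t) * \<kappa> t)"
  define lam where "lam = (\<lambda>t. - \<sigma> * L t * \<kappa> t / N t)"
  define qs where "qs = (\<lambda>t. (\<sigma> / N t) *\<^sub>R U t)"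
  define cs where "cs = (\<lambda>s. c s + R *\<^sub>R asym_normal q s)"
  have Uh: "(U has_vector_derivative ((- L t) *\<^sub>R U t - (L t * \<kappa> t) *\<^sub>R asym_normal q t)) (at t)"
    if t: "t \<in> I" for t
    using u_has2[OF t R] ode t unfolding U_def L_def by simp
  have Ua: "mink (U t) (asym_normal q t) = 0" if t: "t \<in> I" for t
    unfolding U_def using frame_q[OF t] frame_h[OF t] by simp
  have gval: "g t = -1 + (R * mnorm (vd q t) * \<kappa> t)\<^sup>2" if t: "t \<in> I" for t
    unfolding g_def U_def using q_qq[OF t] qh[OF t] hh[OF t] mink_sym[of "central_normal q t" "q t"]
    by (simp add: power2_eq_square algebra_simps)
  have gnz: "g t \<noteq> 0" if t: "t \<in> I" for t
  proof -
    have X: "R\<^sup>2 * (\<kappa> t)\<^sup>2 * (deriv s1 t)\<^sup>2 \<noteq> 1" using nondeg t by blast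
    have "R\<^sup>2 * (\<kappa> t)\<^sup>2 * (mnorm (vd q t))\<^sup>2 \<noteq> 1" using X unfolding ds1[OF t] .
    then show ?thesis unfolding gval[OF t] by (simp add: power_mult_distrib algebra_simps)
  qed
  have gh: "(g has_real_derivative (-2 * L t * g t)) (at t)" if t: "t \<in> I" for t
    unfolding g_def
    by (rule DERIV_cong[OF mink_vderiv[OF Uh[OF t] Uh[OF t]]])
      (use Ua[OF t] mink_sym[of "asym_normal q t" "U t"] in \<open>simp add: algebra_simps\<close>)
  have Npos: "N t > 0" if t: "t \<in> I" for t
    unfolding N_def using gnz[OF t] by simp
  have Nh: "(N has_real_derivative (- L t * N t)) (at t)" if t: "t \<in> I" for t
  proof -
    have e1: "sgn (g t) * (-2 * L t * g t) = -2 * L t * \<bar>g t\<bar>"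
      by (simp add: sgn_if abs_if)
    have e2: "\<bar>g t\<bar> = N t * N t" unfolding N_def by simp
    have "sgn (g t) * (-2 * L t * g t) / (2 * sqrt \<bar>g t\<bar>) = - L t * N t"
      unfolding e1 e2 using Npos[OF t] unfolding N_def[symmetric] by simp
    then show ?thesis using sqrt_abs_deriv[OF gh[OF t] gnz[OF t]] unfolding N_def by simp
  qed
  have qsh: "(qs has_vector_derivative lam t *\<^sub>R asym_normal q t) (at t)" if t: "t \<in> I" for t
  proof -
    have Nnz: "N t \<noteq> 0" using Npos[OF t] by simp
    have c1: "(0 * N t - \<sigma> * (- L t * N t)) / (N t * N t) = \<sigma> / N t * L t"
      using Nnz by (simp add: field_simps)
    show ?thesis unfolding qs_def
      apply (rule has_vector_derivative_eq_rhs[OF has_vector_derivative_scaleR[OF DERIV_divide[OF DERIV_const Nh[OF t] Nnz] Uh[OF t]]])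
      unfolding c1 lam_def by (simp add: algebra_simps)
  qed
  have vqs: "vd qs t = lam t *\<^sub>R asym_normal q t" if t: "t \<in> I" for t
    unfolding vd_def by (rule vector_derivative_at[OF qsh[OF t]])
  have csh: "(cs has_vector_derivative U t) (at t)" if t: "t \<in> I" for t
    unfolding cs_def U_def by (rule cs_has[OF t])
  have vcs: "vd cs t = U t" if t: "t \<in> I" for t
    unfolding vd_def by (rule vector_derivative_at[OF csh[OF t]])
  have lampos: "lam t > 0" if t: "t \<in> I" for t
  proof -
    have "lam t = (sgn R * R) * (mnorm (vd q t) * mnorm (vd q t)) * (\<kappa> t * \<kappa> t) / N t"
      unfolding lam_def \<sigma>_def L_def by (simp add: algebra_simps)
    moreover have "sgn R * R > 0" using R by (simp add: sgn_if)
    moreover have "mnorm (vd q t) * mnorm (vd q t) > 0" using m_pos[OF t] by simp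
    moreover have "\<kappa> t * \<kappa> t > 0" using bspec[OF nondeg t] by (auto simp: zero_less_mult_iff linorder_neq_iff)
    ultimately show ?thesis using Npos[OF t] by simp
  qed
  have aa: "mink (asym_normal q t) (asym_normal q t) = 1" if t: "t \<in> I" for t
    using frame_a[OF t] .
  have sig2: "\<sigma> * \<sigma> = 1" unfolding \<sigma>_def using R by (simp add: sgn_if)
  have qsqs: "mink (qs t) (qs t) = sgn (g t)" if t: "t \<in> I" for t
  proof -
    have "mink (qs t) (qs t) = (\<sigma> * \<sigma>) * g t / (N t * N t)"
      unfolding qs_def g_def by (simp add: algebra_simps power2_eq_square)
    also have "\<dots> = g t / \<bar>g t\<bar>" unfolding sig2 N_def by simp
    also have "\<dots> = sgn (g t)" using gnz[OF t] by (simp add: sgn_if)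
    finally show ?thesis .
  qed
  have cn: "central_normal qs t = asym_normal q t" if t: "t \<in> I" for t
  proof -
    have "mnorm (vd qs t) = lam t"
      unfolding vqs[OF t] mnorm_def using aa[OF t] lampos[OF t] by simp
    then show ?thesis unfolding central_normal_def using vqs[OF t] lampos[OF t] by simp
  qed
  have RS: "ruled_surface_on I cs qs"
    unfolding ruled_surface_on_def
  proof (intro ballI conjI)
    fix t assume t: "t \<in> I"
    show "cs differentiable at t" using csh[OF t] by (rule differentiableI_vector)
    show "qs differentiable at t" using qsh[OF t] by (rule differentiableI_vector)
    show "mink (vd cs t) (vd cs t) \<noteq> 0" using gnz[OF t] vcs[OF t] g_def by simp
    show "\<bar>mink (qs t) (qs t)\<bar> = 1" using qsqs[OF t] gnz[OF t] by (simp add: sgn_if)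
    show "mink (vd qs t) (vd qs t) \<noteq> 0" using vqs[OF t] aa[OF t] lampos[OF t] by simp
    show "mink (vd qs t) (vd cs t) = 0" using vqs[OF t] vcs[OF t] Ua[OF t] mink_sym by (metis mink_scale(1) mult_zero_right)
  qed
  have DV: "developable_on I cs qs"
    unfolding developable_on_def dist_param_def
  proof
    fix t assume t: "t \<in> I"
    have "det3 (vd cs t) (qs t) (vd qs t) = 0"
      unfolding vcs[OF t] vqs[OF t] qs_def by (simp add: det3_scale2 det3_scale3 det3_same)
    then show "det3 (vd cs t) (qs t) (vd qs t) / mink (vd qs t) (vd qs t) = 0" by simp
  qed
  have TY: "type_M1_plus_on I qs \<or> type_M1_minus_on I qs"
  proof -
    have "(\<forall>t\<in>I. g t > 0) \<or> (\<forall>t\<in>I. g t < 0)"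
      by (rule sign_const[OF Iint]) (use gh gnz DERIV_isCont in blast)+
    then show ?thesis
      unfolding type_M1_plus_on_def type_M1_minus_on_def spacelike_def timelike_def
      using qsqs cn aa by auto
  qed
  have MO: "mannheim_offset_on I qs q" unfolding mannheim_offset_on_def using cn by blast
  show ?thesis using RS DV TY MO unfolding cs_def by blast
qed

end

theorem theorem5p2:
  fixes I :: "real set"
    and c q :: "real \<Rightarrow> real^3"
    and s1 \<kappa> :: "real \<Rightarrow> real"
    and R :: real
  assumes I: "open I" "is_interval I"
    and surf: "ruled_surface_on I c q"
    and arclen: "\<forall>s\<in>I. \<bar>mink (vd c s) (vd c s)\<bar> = 1"
    and orient: "\<forall>s\<in>I. mink (vd c s) (q s) < 0"
    and regular: "\<forall>s\<in>I. vd q differentiable (at s) \<and> vd (vd q) differentiable (at s)"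
    and type_phi: "type_M1_minus_on I q"
    and dev: "developable_on I c q"
    and s1: "\<forall>s\<in>I. (s1 has_real_derivative mnorm (vd q s)) (at s)"
    and kappa: "\<forall>s\<in>I. vd (central_normal q) s
                  = deriv s1 s *\<^sub>R (q s + \<kappa> s *\<^sub>R asym_normal q s)"
    and R: "R \<noteq> 0"
    and nondeg: "\<forall>s\<in>I. \<kappa> s \<noteq> 0 \<and> R\<^sup>2 * (\<kappa> s)\<^sup>2 * (deriv s1 s)\<^sup>2 \<noteq> 1"
  shows "(\<exists>qs. ruled_surface_on I (\<lambda>s. c s + R *\<^sub>R asym_normal q s) qs
              \<and> developable_on I (\<lambda>s. c s + R *\<^sub>R asym_normal q s) qs
              \<and> (type_M1_plus_on I qs \<or> type_M1_minus_on I qs)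
              \<and> mannheim_offset_on I qs q)
         \<longleftrightarrow> (\<forall>s\<in>I. deriv \<kappa> s
                = - (1 / R) * (R\<^sup>2 * (\<kappa> s)\<^sup>2 * (deriv s1 s)\<^sup>2 - 1)
                  - (1 / deriv s1 s) * deriv (deriv s1) s * \<kappa> s)"
proof
  assume "\<exists>qs. ruled_surface_on I (\<lambda>s. c s + R *\<^sub>R asym_normal q s) qs
              \<and> developable_on I (\<lambda>s. c s + R *\<^sub>R asym_normal q s) qs
              \<and> (type_M1_plus_on I qs \<or> type_M1_minus_on I qs)
              \<and> mannheim_offset_on I qs q"
  then obtain qs where rs: "ruled_surface_on I (\<lambda>s. c s + R *\<^sub>R asym_normal q s) qs"
    and dv: "developable_on I (\<lambda>s. c s + R *\<^sub>R asym_normal q s) qs"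
    and mo: "mannheim_offset_on I qs q" by blast
  show "\<forall>s\<in>I. deriv \<kappa> s
                = - (1 / R) * (R\<^sup>2 * (\<kappa> s)\<^sup>2 * (deriv s1 s)\<^sup>2 - 1)
                  - (1 / deriv s1 s) * deriv (deriv s1) s * \<kappa> s"
    using fwd[OF I(1) surf arclen orient regular type_phi dev s1 kappa _ R rs dv mo] by blast
next
  assume ode: "\<forall>s\<in>I. deriv \<kappa> s
                = - (1 / R) * (R\<^sup>2 * (\<kappa> s)\<^sup>2 * (deriv s1 s)\<^sup>2 - 1)
                  - (1 / deriv s1 s) * deriv (deriv s1) s * \<kappa> s"
  show "\<exists>qs. ruled_surface_on I (\<lambda>s. c s + R *\<^sub>R asym_normal q s) qs
              \<and> developable_on I (\<lambda>s. c s + R *\<^sub>R asym_normal q s) qs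
              \<and> (type_M1_plus_on I qs \<or> type_M1_minus_on I qs)
              \<and> mannheim_offset_on I qs q"
    by (rule bwd[OF I(1) surf arclen orient regular type_phi dev s1 kappa I(2) R ode nondeg])
qed

end
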